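(* Let $\mathcal X$ be a finite set, $f:\mathcal X\to\mathbb R$ with $\min_{x\in\mathcal X}f(x)=0$, $\mu$ a probability measure on $\mathcal X$, $\mathcal N(x)\subseteq\mathcal X$ neighborhoods, $\mathcal Df$ a fixed deterministic choice $\mathcal Df(x)\in\arg\min_{y\in\mathcal N(x)}f(y)$, and $\epsilon\in f(\mathcal X)$ with $\epsilon<\max_{\mathcal X}f$. Let $q(\cdot)$, $p_2(\cdot)$, $a$ be the quantities defined in the context for the algorithm $\mathcal G_1=\mathcal G_{1,\mathcal X\setminus\mathcal F(\mathcal Df)}$. If $$\sum_{j=0}^a\frac{p_2(j)}{(1-q(0))^{j+1}}\ge1,$$ then $$\sup_{p\in[0,1)}\xi_{\rm crit}(\mathcal G_{p,\mathcal X})\ \ge\ \xi_{\rm crit}(\mathcal G_1),$$ i.e. some algorithm of the class $\mathcal A_2=\{\mathcal G_{p,\mathcal X}:p\in[0,1)\}$ has asymptotic convergence exponent at least that of $\mathcal G_1$.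
   Context: Setting. For $p\in[0,1]$ and $A\subseteq\mathcal X$, the algorithm $\mathcal G_{p,A}$ is the Markov chain on $\mathcal X$ with generator $[\mathcal G\phi](x)=p\mathbf 1_A(x)\phi(\mathcal Df(x))+(1-p\mathbf 1_A(x))\mathbf E^\mu[\phi]-\phi(x)$: from $x\in A$ it moves to $\mathcal Df(x)$ with probability $p$ and otherwise jumps to a $\mu$-distributed point; from $x\notin A$ it jumps to a $\mu$-distributed point. Write $\mathcal D^kf$ for the $k$-fold iterate of $\mathcal Df$. Let $\mathcal L(\epsilon)=f^{-1}([0,\epsilon])$, $B(\epsilon)=\mathcal X\setminus\mathcal L(\epsilon)$, $\mathcal W(S)=\{x:\lim_{k\to\infty}\mathcal D^kf(x)\in S\}$, $\Gamma(\epsilon)=\mathcal X\setminus\mathcal W(\mathcal L(\epsilon))$, $\mathcal F(\mathcal Df)=\{x:\mathcal Df(x)=x\}$. For a given $A$: $d(x)=\min\{k\ge0:\mathcal D^kf(x)\in\mathcal F(\mathcal Df)\cup\mathcal L(\epsilon)\cup(\mathcal X\setminus A)\}$; $q(j)=\mu(\mathcal W(\mathcal L(\epsilon))\cap d^{-1}(j))$; $p_1(j)=\mu(\Gamma(\epsilon)\cap d^{-1}(j)\cap(\mathcal D^jf)^{-1}(A))$; $p_2(j)=\mu(\Gamma(\epsilon)\cap d^{-1}(j)\cap(\mathcal D^jf)^{-1}(\mathcal X\setminus A))$; $a=\max\{j:p_1(j)\vee p_2(j)>0\}$, $b=\max\{j:q(j)>0\}$; $\mathcal X_3=\{x:\mathcal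 D^{d(x)}f(x)\in A\cap B(\epsilon)\}$. Define $$Q(\xi,p)=1-\frac{(1-p)e^\xi}{1-pe^\xi}\sum_{j=0}^a p_1(j)-e^\xi\sum_{j=0}^a p_2(j)p^je^{j\xi}-(1-p)e^\xi\sum_{j=0}^{a\vee b}(q(j)+p_2(j))\sum_{i=0}^{j-1}p^ie^{i\xi},$$ with empty sums equal to $0$. It is known that if $\mathcal X_3=\emptyset$ then $Q(\cdot,p)$ has a unique positive root for every $p\in[0,1]$, and if $\mathcal X_3\neq\emptyset$ then $Q(\cdot,p)$ has a unique root in $(0,-\log p)$ for every $p\in[0,1)$ (with $-\log0=\infty$); this root is the critical exponent $\xi_{\rm crit}(\mathcal G_{p,A})$. In particular $\xi_{\rm crit}(\mathcal G_1)$ is the positive root of $1-e^\xi\sum_{j=0}^ap_2(j)e^{j\xi}=0$ (quantities for $A=\mathcal X\setminus\mathcal F(\mathcal Df)$), and for $p\in[0,1)$, $\xi_{\rm crit}(\mathcal G_{p,\mathcal X})$ is the root in $(0,-\log p)$ of $1-e^\xi+(1-p)e^\xi\sum_{j=0}^bq(j)p^je^{j\xi}=0$ (quantities for $A=\mathcal X$). For both choices of $A$, $d(x)=\min\{k\ge0:\mathcal D^kf(x)\in\mathcal F(\mathcal Df)\cup\mathcal L(\epsilon)\}$, so $q(\cdot)$ and $b$ are the same. *)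

theory Defs
  imports "HOL-Probability.Probability"
begin

text \<open>The finite state space X is the finite type 'a; mu is a pmf on it;
  D is the deterministic map Df; the k-fold iterate is D^^k.\<close>

definition Lset :: "('a \<Rightarrow> real) \<Rightarrow> real \<Rightarrow> 'a set" where
  "Lset f eps = {x. 0 \<le> f x \<and> f x \<le> eps}"

definition Bset :: "('a \<Rightarrow> real) \<Rightarrow> real \<Rightarrow> 'a set" where
  "Bset f eps = - Lset f eps"

text \<open>Limit of the iterates in the finite (discrete) set: eventually constant.\<close>
definition iter_lim :: "('a \<Rightarrow> 'a) \<Rightarrow> 'a \<Rightarrow> 'a \<Rightarrow> bool" where
  "iter_lim D x y = (\<exists>K. \<forall>k\<ge>K. (D ^^ k) x = y)"

definition Wset :: "('a \<Rightarrow> 'a) \<Rightarrow> 'a set \<Rightarrow> 'a set" where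
  "Wset D S = {x. \<exists>y\<in>S. iter_lim D x y}"

definition Gamma :: "('a \<Rightarrow> 'a) \<Rightarrow> ('a \<Rightarrow> real) \<Rightarrow> real \<Rightarrow> 'a set" where
  "Gamma D f eps = - Wset D (Lset f eps)"

definition Fixset :: "('a \<Rightarrow> 'a) \<Rightarrow> 'a set" where
  "Fixset D = {x. D x = x}"

definition stopset :: "('a \<Rightarrow> 'a) \<Rightarrow> ('a \<Rightarrow> real) \<Rightarrow> real \<Rightarrow> 'a set \<Rightarrow> 'a set" where
  "stopset D f eps A = Fixset D \<union> Lset f eps \<union> (- A)"

text \<open>dlev D f eps A j is the level set d^{-1}(j) of the hitting time d.\<close>
definition dlev :: "('a \<Rightarrow> 'a) \<Rightarrow> ('a \<Rightarrow> real) \<Rightarrow> real \<Rightarrow> 'a set \<Rightarrow> nat \<Rightarrow> 'a set" where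
  "dlev D f eps A j = {x. (D ^^ j) x \<in> stopset D f eps A \<and>
                          (\<forall>k<j. (D ^^ k) x \<notin> stopset D f eps A)}"

definition qf :: "'a pmf \<Rightarrow> ('a \<Rightarrow> 'a) \<Rightarrow> ('a \<Rightarrow> real) \<Rightarrow> real \<Rightarrow> 'a set \<Rightarrow> nat \<Rightarrow> real" where
  "qf mu D f eps A j = measure_pmf.prob mu (Wset D (Lset f eps) \<inter> dlev D f eps A j)"

definition p1f :: "'a pmf \<Rightarrow> ('a \<Rightarrow> 'a) \<Rightarrow> ('a \<Rightarrow> real) \<Rightarrow> real \<Rightarrow> 'a set \<Rightarrow> nat \<Rightarrow> real" where
  "p1f mu D f eps A j = measure_pmf.prob mu
     (Gamma D f eps \<inter> dlev D f eps A j \<inter> {x. (D ^^ j) x \<in> A})"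

definition p2f :: "'a pmf \<Rightarrow> ('a \<Rightarrow> 'a) \<Rightarrow> ('a \<Rightarrow> real) \<Rightarrow> real \<Rightarrow> 'a set \<Rightarrow> nat \<Rightarrow> real" where
  "p2f mu D f eps A j = measure_pmf.prob mu
     (Gamma D f eps \<inter> dlev D f eps A j \<inter> {x. (D ^^ j) x \<notin> A})"

definition a_idx :: "'a pmf \<Rightarrow> ('a \<Rightarrow> 'a) \<Rightarrow> ('a \<Rightarrow> real) \<Rightarrow> real \<Rightarrow> 'a set \<Rightarrow> nat" where
  "a_idx mu D f eps A = Max {j. p1f mu D f eps A j > 0 \<or> p2f mu D f eps A j > 0}"

definition b_idx :: "'a pmf \<Rightarrow> ('a \<Rightarrow> 'a) \<Rightarrow> ('a \<Rightarrow> real) \<Rightarrow> real \<Rightarrow> 'a set \<Rightarrow> nat" where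
  "b_idx mu D f eps A = Max {j. qf mu D f eps A j > 0}"

definition X3 :: "('a \<Rightarrow> 'a) \<Rightarrow> ('a \<Rightarrow> real) \<Rightarrow> real \<Rightarrow> 'a set \<Rightarrow> 'a set" where
  "X3 D f eps A = {x. \<exists>j. x \<in> dlev D f eps A j \<and> (D ^^ j) x \<in> A \<inter> Bset f eps}"

definition Qfun :: "'a pmf \<Rightarrow> ('a \<Rightarrow> 'a) \<Rightarrow> ('a \<Rightarrow> real) \<Rightarrow> real \<Rightarrow> 'a set \<Rightarrow> real \<Rightarrow> real \<Rightarrow> real" where
  "Qfun mu D f eps A \<xi> p =
     (let a = a_idx mu D f eps A; b = b_idx mu D f eps A;
          q = qf mu D f eps A; p1 = p1f mu D f eps A; p2 = p2f mu D f eps A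
      in 1 - (1 - p) * exp \<xi> / (1 - p * exp \<xi>) * (\<Sum>j=0..a. p1 j)
           - exp \<xi> * (\<Sum>j=0..a. p2 j * p ^ j * exp (real j * \<xi>))
           - (1 - p) * exp \<xi> * (\<Sum>j=0..max a b. (q j + p2 j) *
                                   (\<Sum>i<j. p ^ i * exp (real i * \<xi>))))"

text \<open>Critical exponent of G_{p,A}: the unique positive root of Q(.,p) if X3 is empty,
  otherwise the unique root in (0, -log p) (with -log 0 = infinity).\<close>
definition xi_crit :: "'a pmf \<Rightarrow> ('a \<Rightarrow> 'a) \<Rightarrow> ('a \<Rightarrow> real) \<Rightarrow> real \<Rightarrow> 'a set \<Rightarrow> real \<Rightarrow> real" where
  "xi_crit mu D f eps A p =
     (if X3 D f eps A = {}
      then (THE \<xi>. 0 < \<xi> \<and> Qfun mu D f eps A \<xi> p = 0)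
      else (THE \<xi>. 0 < \<xi> \<and> (p = 0 \<or> \<xi> < - ln p) \<and> Qfun mu D f eps A \<xi> p = 0))"

end

theory Submission
  imports Defs
begin

lemma dlev_disj:
  assumes "x \<in> dlev D f eps A i" "x \<in> dlev D f eps A j"
  shows "i = j"
proof (rule ccontr)
  assume "i \<noteq> j"
  then consider "i < j" | "j < i" by linarith
  then show False using assms unfolding dlev_def by cases auto
qed

lemma sum_zero_pow: "(\<Sum>i<j. (0::real) ^ i * g i) = (if j = 0 then 0 else g 0)"
  by (induction j) auto

lemma sum_zero_pow_exp: "(\<Sum>i<j. (0::real) ^ i * exp (real i * x)) = (if j = 0 then 0 else 1)"
  by (induction j) auto

lemma mu_disj_sum:
  fixes mu :: "'a pmf"
  assumes "finite S" "disjoint_family_on A S"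
  shows "(\<Sum>i\<in>S. measure_pmf.prob mu (A i)) = measure_pmf.prob mu (\<Union>i\<in>S. A i)"
  using measure_finite_Union[OF assms(1) _ assms(2), of "measure_pmf mu"]
  by (simp add: measure_pmf.emeasure_eq_measure)

theorem theorem2:
  fixes f :: "'a::finite \<Rightarrow> real" and mu :: "'a pmf" and N :: "'a \<Rightarrow> 'a set"
    and D :: "'a \<Rightarrow> 'a" and eps :: real
  assumes fmin: "Min (range f) = 0"
    and Dchoice: "\<forall>x. D x \<in> N x \<and> (\<forall>y\<in>N x. f (D x) \<le> f y)"
    and eps_val: "eps \<in> range f"
    and eps_lt: "eps < Max (range f)"
    and hyp: "(\<Sum>j=0..a_idx mu D f eps (- Fixset D).
                 p2f mu D f eps (- Fixset D) j /
                 (1 - qf mu D f eps (- Fixset D) 0) ^ (j + 1)) \<ge> 1"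
  shows "(SUP p\<in>{0..<1}. ereal (xi_crit mu D f eps UNIV p))
           \<ge> ereal (xi_crit mu D f eps (- Fixset D) 1)"
proof -
  define A1 where "A1 = - Fixset D"
  define P1 where "P1 = p1f mu D f eps A1"
  define P2 where "P2 = p2f mu D f eps A1"
  define q where "q = qf mu D f eps A1"
  define a where "a = a_idx mu D f eps A1"
  define m where "m = max a (b_idx mu D f eps A1)"
  define Gm where "Gm j = Gamma D f eps \<inter> dlev D f eps UNIV j" for j
  define Wj where "Wj j = Wset D (Lset f eps) \<inter> dlev D f eps UNIV j" for j
  have stop_eq: "stopset D f eps A1 = stopset D f eps UNIV"
    unfolding stopset_def A1_def by auto
  have dl: "dlev D f eps A1 j = dlev D f eps UNIV j" for j
    unfolding dlev_def stop_eq ..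
  have qU: "qf mu D f eps UNIV = q"
    by (rule ext) (simp add: q_def qf_def dl)
  have P1nn: "P1 j \<ge> 0" for j unfolding P1_def p1f_def by simp
  have P2nn: "P2 j \<ge> 0" for j unfolding P2_def p2f_def by simp
  have qnn: "q j \<ge> 0" for j unfolding q_def qf_def by simp
  have p1U: "p1f mu D f eps UNIV j = P1 j + P2 j" for j
  proof -
    have "P1 j + P2 j = measure_pmf.prob mu (Gm j \<inter> {x. (D ^^ j) x \<in> A1} \<union> Gm j \<inter> {x. (D ^^ j) x \<notin> A1})"
      unfolding P1_def P2_def p1f_def p2f_def Gm_def dl
      by (subst measure_pmf.finite_measure_Union) (auto simp: Int_assoc)
    also have "Gm j \<inter> {x. (D ^^ j) x \<in> A1} \<union> Gm j \<inter> {x. (D ^^ j) x \<notin> A1} = Gm j" by auto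
    finally show ?thesis unfolding p1f_def Gm_def by simp
  qed
  have p2U: "p2f mu D f eps UNIV j = 0" for j unfolding p2f_def by simp
  have aU: "a_idx mu D f eps UNIV = a"
  proof -
    have "{j. p1f mu D f eps UNIV j > 0 \<or> p2f mu D f eps UNIV j > 0} = {j. P1 j > 0 \<or> P2 j > 0}"
      using P1nn P2nn by (auto simp: p1U p2U add_pos_nonneg add_nonneg_pos)
    then show ?thesis unfolding a_idx_def a_def P1_def P2_def by simp
  qed
  have bU: "b_idx mu D f eps UNIV = b_idx mu D f eps A1"
    unfolding b_idx_def qU q_def ..
  have X3e: "X3 D f eps A1 = {}"
    unfolding X3_def dlev_def stopset_def Bset_def A1_def by auto
  define S2 where "S2 = (\<Sum>j=0..a. P2 j)"
  define T where "T = (\<Sum>j=0..a. P1 j + P2 j) + (\<Sum>j=0..m. q j * (if j = 0 then 0 else 1))"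
  define G where "G \<xi> = exp \<xi> * (\<Sum>j=0..a. P2 j * exp (real j * \<xi>))" for \<xi>
  have Q1: "Qfun mu D f eps A1 \<xi> 1 = 1 - G \<xi>" for \<xi>
    unfolding Qfun_def G_def a_def P2_def by (simp add: Let_def)
  have QU: "Qfun mu D f eps UNIV \<xi> 0 = 1 - exp \<xi> * T" for \<xi>
    unfolding Qfun_def T_def Let_def aU bU qU p1U p2U sum_zero_pow_exp
    by (simp add: m_def algebra_simps sum_distrib_left)
  have xi1: "xi_crit mu D f eps A1 1 = (THE \<xi>. 0 < \<xi> \<and> 1 - G \<xi> = 0)"
    unfolding xi_crit_def X3e Q1 by simp
  have xi0: "xi_crit mu D f eps UNIV 0 = (THE \<xi>. 0 < \<xi> \<and> 1 - exp \<xi> * T = 0)"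
    unfolding xi_crit_def QU by simp
  have hyp': "(\<Sum>j=0..a. P2 j / (1 - q 0) ^ (j + 1)) \<ge> 1"
    using hyp unfolding a_def P2_def q_def A1_def .
  have S2T: "S2 \<le> T"
  proof -
    have "S2 \<le> (\<Sum>j=0..a. P1 j + P2 j)" unfolding S2_def
      by (rule sum_mono) (simp add: P1nn)
    moreover have "0 \<le> (\<Sum>j=0..m. q j * (if j = 0 then 0 else 1))"
      by (rule sum_nonneg) (simp add: qnn)
    ultimately show ?thesis unfolding T_def by linarith
  qed
  have Tq: "T + q 0 \<le> 1"
  proof -
    have e1: "(\<Sum>j=0..m. q j * (if j = 0 then 0 else 1)) + q 0 = (\<Sum>j=0..m. q j)"
    proof -
      have "(\<Sum>j=0..m. q j * (if j = 0 then 0 else 1)) = (\<Sum>j\<in>{0..m}-{0}. q j)"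
        by (subst sum.remove[of _ 0]) auto
      moreover have "(\<Sum>j=0..m. q j) = q 0 + (\<Sum>j\<in>{0..m}-{0}. q j)"
        by (subst sum.remove[of _ 0]) auto
      ultimately show ?thesis by simp
    qed
    have e2: "(\<Sum>j=0..a. P1 j + P2 j) = measure_pmf.prob mu (\<Union>j\<in>{0..a}. Gm j)"
    proof -
      have "(\<Sum>j=0..a. P1 j + P2 j) = (\<Sum>j=0..a. measure_pmf.prob mu (Gm j))"
        unfolding p1U[symmetric] p1f_def Gm_def by simp
      also have "\<dots> = measure_pmf.prob mu (\<Union>j\<in>{0..a}. Gm j)"
        by (rule mu_disj_sum) (auto simp: disjoint_family_on_def Gm_def dest: dlev_disj)
      finally show ?thesis .
    qed
    have e3: "(\<Sum>j=0..m. q j) = measure_pmf.prob mu (\<Union>j\<in>{0..m}. Wj j)"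
    proof -
      have "(\<Sum>j=0..m. q j) = (\<Sum>j=0..m. measure_pmf.prob mu (Wj j))"
        unfolding qU[symmetric] qf_def Wj_def by simp
      also have "\<dots> = measure_pmf.prob mu (\<Union>j\<in>{0..m}. Wj j)"
        by (rule mu_disj_sum) (auto simp: disjoint_family_on_def Wj_def dest: dlev_disj)
      finally show ?thesis .
    qed
    have "measure_pmf.prob mu (\<Union>j\<in>{0..a}. Gm j) + measure_pmf.prob mu (\<Union>j\<in>{0..m}. Wj j)
       = measure_pmf.prob mu ((\<Union>j\<in>{0..a}. Gm j) \<union> (\<Union>j\<in>{0..m}. Wj j))"
      by (subst measure_pmf.finite_measure_Union) (auto simp: Gm_def Wj_def Gamma_def)
    also have "\<dots> \<le> 1" by simp
    finally show ?thesis using e1 e2 e3 unfolding T_def by linarith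
  qed
  have q0nn: "q 0 \<ge> 0" by (rule qnn)
  have S2pos: "S2 > 0"
  proof (rule ccontr)
    assume "\<not> S2 > 0"
    moreover have "S2 \<ge> 0" unfolding S2_def by (rule sum_nonneg) (simp add: P2nn)
    ultimately have "S2 = 0" by linarith
    then have "\<forall>j\<in>{0..a}. P2 j = 0" unfolding S2_def
      using sum_nonneg_eq_0_iff[of "{0..a}" P2] P2nn by auto
    then have "(\<Sum>j=0..a. P2 j / (1 - q 0) ^ (j + 1)) = 0" by simp
    then show False using hyp' by simp
  qed
  have Gmono: "G x < G y" if "x < y" for x y
  proof -
    have "\<exists>j0\<in>{0..a}. P2 j0 > 0"
    proof (rule ccontr)
      assume H: "\<not> (\<exists>j0\<in>{0..a}. P2 j0 > 0)"
      have "\<forall>j\<in>{0..a}. P2 j = 0"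
      proof
        fix j assume "j \<in> {0..a}"
        then have "\<not> P2 j > 0" using H by blast
        then show "P2 j = 0" using P2nn[of j] by linarith
      qed
      then have "S2 = 0" unfolding S2_def by simp
      then show False using S2pos by simp
    qed
    then obtain j0 where j0: "j0 \<in> {0..a}" "P2 j0 > 0" by blast
    have "G x = (\<Sum>j=0..a. P2 j * exp (real (j+1) * x))"
      unfolding G_def sum_distrib_left by (rule sum.cong) (auto simp: exp_add[symmetric] algebra_simps)
    also have "\<dots> < (\<Sum>j=0..a. P2 j * exp (real (j+1) * y))"
    proof (rule sum_strict_mono_ex1)
      show "\<forall>j\<in>{0..a}. P2 j * exp (real (j+1) * x) \<le> P2 j * exp (real (j+1) * y)"
        using that P2nn by (auto intro!: mult_left_mono)
      show "\<exists>j\<in>{0..a}. P2 j * exp (real (j+1) * x) < P2 j * exp (real (j+1) * y)"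
        using that j0 by (intro bexI[of _ j0]) auto
    qed simp
    also have "\<dots> = G y"
      unfolding G_def sum_distrib_left by (rule sum.cong) (auto simp: exp_add[symmetric] algebra_simps)
    finally show ?thesis .
  qed
  have G0: "G 0 = S2" unfolding G_def S2_def by simp
  show ?thesis
  proof (cases "T < 1")
    case False
    then have "T = 1" "q 0 = 0" using Tq q0nn by linarith+
    have "S2 \<ge> 1" using hyp' \<open>q 0 = 0\<close> unfolding S2_def by simp
    then have "S2 = 1" using S2T \<open>T = 1\<close> by linarith
    have n1: "\<not> (0 < \<xi> \<and> 1 - G \<xi> = 0)" for \<xi>
      using Gmono[of 0 \<xi>] G0 \<open>S2 = 1\<close> by auto
    have n0: "\<not> (0 < \<xi> \<and> 1 - exp \<xi> * T = 0)" for \<xi>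
      using \<open>T = 1\<close> by auto
    have "xi_crit mu D f eps A1 1 = xi_crit mu D f eps UNIV 0"
    proof -
      have "(\<lambda>\<xi>. 0 < \<xi> \<and> 1 - G \<xi> = 0) = (\<lambda>\<xi>. 0 < \<xi> \<and> 1 - exp \<xi> * T = 0)"
        using n0 n1 by blast
      then show ?thesis unfolding xi0 xi1 by simp
    qed
    then show ?thesis unfolding A1_def[symmetric]
      by (metis SUP_upper atLeastLessThan_iff order_refl zero_less_one)
  next
    case True
    define x0 where "x0 = - ln T"
    have Tpos: "T > 0" using S2T S2pos by linarith
    have x0pos: "x0 > 0" unfolding x0_def using True Tpos by simp
    have ex0: "exp x0 = 1 / T" unfolding x0_def using Tpos by (simp add: exp_minus inverse_eq_divide)
    have xi0v: "xi_crit mu D f eps UNIV 0 = x0"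
      unfolding xi0
    proof (rule the_equality)
      show "0 < x0 \<and> 1 - exp x0 * T = 0" using x0pos ex0 Tpos by simp
      fix \<xi> assume "0 < \<xi> \<and> 1 - exp \<xi> * T = 0"
      then have "exp \<xi> = 1 / T" using Tpos by (simp add: field_simps)
      then show "\<xi> = x0" using ex0 by (metis exp_inj_iff)
    qed
    have Gx0: "G x0 \<ge> 1"
    proof -
      have ej: "exp (real j * x0) = 1 / T ^ j" for j
        by (simp only: exp_of_nat_mult ex0 power_one_over)
      have "G x0 = (\<Sum>j=0..a. P2 j / T ^ (j + 1))"
        unfolding G_def sum_distrib_left ex0 ej
        by (rule sum.cong) (auto simp: field_simps)
      also have "\<dots> \<ge> (\<Sum>j=0..a. P2 j / (1 - q 0) ^ (j + 1))"
        using Tq Tpos P2nn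
        by (intro sum_mono divide_left_mono power_mono mult_pos_pos zero_less_power) auto
      finally show ?thesis using hyp' by linarith
    qed
    have Gcont: "continuous_on {0..x0} G" unfolding G_def by (intro continuous_intros)
    obtain x1 where x1: "0 \<le> x1" "x1 \<le> x0" "G x1 = 1"
      using IVT'[of G 0 1 x0] G0 S2T True Gx0 x0pos Gcont by force
    have x1pos: "x1 > 0" using x1 G0 S2T True by (cases "x1 = 0") auto
    have xi1v: "xi_crit mu D f eps A1 1 = x1"
      unfolding xi1
    proof (rule the_equality)
      show "0 < x1 \<and> 1 - G x1 = 0" using x1 x1pos by simp
      fix \<xi> assume "0 < \<xi> \<and> 1 - G \<xi> = 0"
      then show "\<xi> = x1" using Gmono[of \<xi> x1] Gmono[of x1 \<xi>] x1 by force
    qed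
    have "ereal (xi_crit mu D f eps A1 1) \<le> ereal (xi_crit mu D f eps UNIV 0)"
      using xi0v xi1v x1 by simp
    also have "\<dots> \<le> (SUP p\<in>{0..<1}. ereal (xi_crit mu D f eps UNIV p))"
      by (rule SUP_upper) simp
    finally show ?thesis unfolding A1_def .
  qed
qed

end
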